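(* Let $k$ be a positive integer and let $D$ be a connected digraph (i.e., its underlying undirected graph is connected) of order $n\ge\max\{k,2\}$. Then $\gamma_{rk}(D)\le\gamma_{trk}(D)\le 2\gamma_{rk}(D)-k+1$, and both bounds are sharp (attained by some such digraphs).
   Context: All digraphs are finite, with no loops or multiple arcs (pairs of opposite arcs are allowed). $N^-(v)$ denotes the set of in-neighbors of $v$. A vertex is isolated if it has no in-neighbor and no out-neighbor. For a positive integer $k$, a $k$-rainbow dominating function ($k$RDF) on $D$ is a function $f:V(D)\to\mathcal P(\{1,\dots,k\})$ such that every $v$ with $f(v)=\emptyset$ satisfies $\bigcup_{u\in N^-(v)}f(u)=\{1,\dots,k\}$; its weight is $\omega(f)=\sum_v|f(v)|$; $\gamma_{rk}(D)$ is the minimum weight of a $k$RDF on $D$. If $D$ has no isolated vertex, a total $k$RDF (T$k$RDF) is a $k$RDF $f$ such that the subdigraph induced by $\{v:f(v)\ne\emptyset\}$ has no isolated vertex; $\gamma_{trk}(D)$ is the minimum weight of a T$k$RDF. *)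

theory Defs
  imports Main
begin

text \<open>A digraph is given by a vertex set V and an arc relation A (pairs (u,v) = arc u -> v).
  Finite, no loops, no multiple arcs (A is a set); opposite arcs are allowed.\<close>
definition digraph :: "'a set \<Rightarrow> ('a \<times> 'a) set \<Rightarrow> bool" where
  "digraph V A \<longleftrightarrow> finite V \<and> A \<subseteq> V \<times> V \<and> (\<forall>v. (v, v) \<notin> A)"

definition connected_digraph :: "'a set \<Rightarrow> ('a \<times> 'a) set \<Rightarrow> bool" where
  "connected_digraph V A \<longleftrightarrow> (\<forall>u\<in>V. \<forall>v\<in>V. (u, v) \<in> (A \<union> A\<inverse>)\<^sup>*)"

definition in_nbrs :: "('a \<times> 'a) set \<Rightarrow> 'a \<Rightarrow> 'a set" where
  "in_nbrs A v = {u. (u, v) \<in> A}"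

definition isolated :: "'a set \<Rightarrow> ('a \<times> 'a) set \<Rightarrow> 'a \<Rightarrow> bool" where
  "isolated V A v \<longleftrightarrow> \<not> (\<exists>u\<in>V. (u, v) \<in> A \<or> (v, u) \<in> A)"

definition no_isolated :: "'a set \<Rightarrow> ('a \<times> 'a) set \<Rightarrow> bool" where
  "no_isolated V A \<longleftrightarrow> (\<forall>v\<in>V. \<not> isolated V A v)"

definition induced_arcs :: "('a \<times> 'a) set \<Rightarrow> 'a set \<Rightarrow> ('a \<times> 'a) set" where
  "induced_arcs A S = A \<inter> (S \<times> S)"

definition is_kRDF :: "nat \<Rightarrow> 'a set \<Rightarrow> ('a \<times> 'a) set \<Rightarrow> ('a \<Rightarrow> nat set) \<Rightarrow> bool" where
  "is_kRDF k V A f \<longleftrightarrow>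
     (\<forall>v\<in>V. f v \<subseteq> {1..k}) \<and>
     (\<forall>v\<in>V. f v = {} \<longrightarrow> (\<Union>u\<in>in_nbrs A v. f u) = {1..k})"

definition weight :: "'a set \<Rightarrow> ('a \<Rightarrow> nat set) \<Rightarrow> nat" where
  "weight V f = (\<Sum>v\<in>V. card (f v))"

definition is_TkRDF :: "nat \<Rightarrow> 'a set \<Rightarrow> ('a \<times> 'a) set \<Rightarrow> ('a \<Rightarrow> nat set) \<Rightarrow> bool" where
  "is_TkRDF k V A f \<longleftrightarrow> is_kRDF k V A f \<and>
     (let S = {v\<in>V. f v \<noteq> {}} in no_isolated S (induced_arcs A S))"

definition gamma_rk :: "nat \<Rightarrow> 'a set \<Rightarrow> ('a \<times> 'a) set \<Rightarrow> nat" where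
  "gamma_rk k V A = (LEAST w. \<exists>f. is_kRDF k V A f \<and> weight V f = w)"

definition gamma_trk :: "nat \<Rightarrow> 'a set \<Rightarrow> ('a \<times> 'a) set \<Rightarrow> nat" where
  "gamma_trk k V A = (LEAST w. \<exists>f. is_TkRDF k V A f \<and> weight V f = w)"

end

theory Submission
  imports Defs
begin

lemma rk_le: "is_kRDF k V A f \<Longrightarrow> gamma_rk k V A \<le> weight V f"
  unfolding gamma_rk_def by (rule Least_le) auto

lemma trk_le: "is_TkRDF k V A f \<Longrightarrow> gamma_trk k V A \<le> weight V f"
  unfolding gamma_trk_def by (rule Least_le) auto

lemma rk_ex: "is_kRDF k V A f \<Longrightarrow> \<exists>g. is_kRDF k V A g \<and> weight V g = gamma_rk k V A"
  unfolding gamma_rk_def by (rule LeastI_ex) auto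

lemma trk_ex: "is_TkRDF k V A f \<Longrightarrow> \<exists>g. is_TkRDF k V A g \<and> weight V g = gamma_trk k V A"
  unfolding gamma_trk_def by (rule LeastI_ex) auto

lemma has_nbr:
  assumes "digraph V A" "connected_digraph V A" "card V \<ge> 2" "v \<in> V"
  shows "\<exists>u\<in>V. (u,v)\<in>A \<or> (v,u)\<in>A"
proof -
  have fin: "finite V" using assms(1) by (simp add: digraph_def)
  obtain u where u: "u \<in> V" "u \<noteq> v"
  proof (rule ccontr)
    assume "\<not> thesis"
    then have "V \<subseteq> {v}" using that by blast
    then have "card V \<le> 1" using card_mono[of "{v}" V] by simp
    then show False using assms(3) by simp
  qed
  have "(v,u) \<in> (A \<union> A\<inverse>)\<^sup>*" using assms(2) u assms(4) by (simp add: connected_digraph_def)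
  then obtain y where "(v,y) \<in> A \<union> A\<inverse>"
    by (rule converse_rtranclE) (use u in auto)
  moreover have "A \<subseteq> V \<times> V" using assms(1) by (simp add: digraph_def)
  ultimately show ?thesis by auto
qed

lemma ones_kRDF: "k \<ge> 1 \<Longrightarrow> is_kRDF k V A (\<lambda>v. {1})"
  by (simp add: is_kRDF_def)

lemma ones_TkRDF:
  assumes "k \<ge> 1" "digraph V A" "connected_digraph V A" "card V \<ge> 2"
  shows "is_TkRDF k V A (\<lambda>v. {1})"
proof -
  have "A \<subseteq> V \<times> V" using assms(2) by (simp add: digraph_def)
  then have "induced_arcs A V = A" by (auto simp: induced_arcs_def)
  moreover have "no_isolated V A"
    using has_nbr[OF assms(2-4)] by (auto simp: no_isolated_def isolated_def)
  ultimately show ?thesis using ones_kRDF[OF assms(1)] by (simp add: is_TkRDF_def)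
qed

lemma card_ge1:
  assumes "is_kRDF k V A f" "v \<in> V" "f v \<noteq> {}"
  shows "card (f v) \<ge> 1"
proof -
  have "f v \<subseteq> {1..k}" using assms by (simp add: is_kRDF_def)
  then have "finite (f v)" using finite_subset by blast
  then show ?thesis using assms(3) by (simp add: Suc_le_eq card_gt_0_iff)
qed

lemma sum_N_ge:
  assumes "is_kRDF k V A f" "digraph V A" "w \<in> V" "f w = {}"
  shows "k \<le> (\<Sum>u\<in>in_nbrs A w. card (f u))" "in_nbrs A w \<subseteq> V"
proof -
  show NV: "in_nbrs A w \<subseteq> V" using assms(2) by (auto simp: digraph_def in_nbrs_def)
  have "(\<Union>u\<in>in_nbrs A w. f u) = {1..k}" using assms by (simp add: is_kRDF_def)
  then have "k = card (\<Union>u\<in>in_nbrs A w. f u)" by simp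
  also have "\<dots> \<le> (\<Sum>u\<in>in_nbrs A w. card (f u))"
    by (rule card_UN_le) (use NV assms(2) finite_subset in \<open>auto simp: digraph_def\<close>)
  finally show "k \<le> (\<Sum>u\<in>in_nbrs A w. card (f u))" .
qed

lemma weight_ge_k:
  assumes "is_kRDF k V A f" "digraph V A" "card V \<ge> k"
  shows "weight V f \<ge> k"
proof -
  have fin: "finite V" using assms(2) by (simp add: digraph_def)
  show ?thesis
  proof (cases "\<exists>w\<in>V. f w = {}")
    case True
    then obtain w where w: "w \<in> V" "f w = {}" by blast
    note s = sum_N_ge[OF assms(1,2) w]
    have "(\<Sum>u\<in>in_nbrs A w. card (f u)) \<le> (\<Sum>u\<in>V. card (f u))"
      by (rule sum_mono2) (use fin s in auto)
    then show ?thesis using s by (simp add: weight_def)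
  next
    case False
    have "card V = (\<Sum>u\<in>V. 1)" by simp
    also have "\<dots> \<le> (\<Sum>u\<in>V. card (f u))"
      by (rule sum_mono) (use card_ge1[OF assms(1)] False in auto)
    finally show ?thesis using assms(3) by (simp add: weight_def)
  qed
qed


lemma tst: "finite V \<Longrightarrow> (\<Sum>v\<in>V. if v \<in> T then 1 else (0::nat)) = card (V \<inter> T)"
proof -
  assume fin: "finite V"
  have "(\<Sum>v\<in>V. if v \<in> T then 1 else (0::nat)) = sum (\<lambda>_. 1) {x\<in>V. x \<in> T}"
    by (rule sum.inter_filter[OF fin, symmetric])
  also have "{x\<in>V. x \<in> T} = V \<inter> T" by blast
  finally show ?thesis by simp
qed

lemma adj_ok: "u \<in> S' \<Longrightarrow> v \<in> S' \<Longrightarrow> (u,v)\<in>A \<or> (v,u)\<in>A \<Longrightarrow> \<not> \<not> (\<exists>u\<in>S'. (u, v) \<in> A \<inter> S' \<times> S' \<or> (v, u) \<in> A \<inter> S' \<times> S')"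
  by blast

lemma part2:
  assumes k: "k \<ge> 1" and D: "digraph V A" and C: "connected_digraph V A"
    and n: "card V \<ge> max k 2"
  shows "int (gamma_trk k V A) \<le> 2 * int (gamma_rk k V A) - int k + 1"
proof -
  obtain f where f: "is_kRDF k V A f" "weight V f = gamma_rk k V A"
    using rk_ex[OF ones_kRDF[OF k]] by blast
  have fin: "finite V" using D by (simp add: digraph_def)
  have AV: "A \<subseteq> V \<times> V" using D by (simp add: digraph_def)
  have n2: "card V \<ge> 2" and nk: "card V \<ge> k" using n by auto
  have wk: "weight V f \<ge> k" using weight_ge_k[OF f(1) D nk] .
  show ?thesis
  proof (cases "\<exists>w\<in>V. f w = {}")
    case False
    have "{v\<in>V. f v \<noteq> {}} = V" using False by auto
    moreover have "induced_arcs A V = A" using AV by (auto simp: induced_arcs_def)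
    moreover have "no_isolated V A"
      using has_nbr[OF D C n2] by (auto simp: no_isolated_def isolated_def)
    ultimately have "is_TkRDF k V A f" using f(1) by (simp add: is_TkRDF_def)
    then have "gamma_trk k V A \<le> weight V f" by (rule trk_le)
    then show ?thesis using wk f(2) by linarith
  next
    case True
    then obtain w where w: "w \<in> V" "f w = {}" by blast
    define N where "N = in_nbrs A w"
    define S where "S = {v\<in>V. f v \<noteq> {}}"
    define g where "g v = (SOME u. u\<in>V \<and> ((u,v)\<in>A \<or> (v,u)\<in>A))" for v
    define T where "T = insert w (g ` (S - N))"
    define f' where "f' v = (if v\<in>T then f v \<union> {1} else f v)" for v
    have gprop: "g v \<in> V \<and> ((g v,v)\<in>A \<or> (v,g v)\<in>A)" if "v \<in> V" for v
      unfolding g_def by (rule someI_ex) (use has_nbr[OF D C n2 that] in blast)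
    have SV: "S \<subseteq> V" by (auto simp: S_def)
    have TV: "T \<subseteq> V" using w gprop SV by (auto simp: T_def)
    have finSN: "finite (S - N)" using fin SV finite_subset by blast
    have cardT: "card T \<le> card (S - N) + 1"
    proof -
      have "card T \<le> card (g ` (S - N)) + 1"
        unfolding T_def using finSN by (simp add: card_insert_if)
      also have "card (g ` (S - N)) \<le> card (S - N)" using card_image_le finSN by blast
      finally show ?thesis by simp
    qed
    note s = sum_N_ge[OF f(1) D w]
    have NV: "N \<subseteq> V" using s(2) N_def by simp
    have wS: "weight V f \<ge> card (S - N) + k"
    proof -
      have "weight V f = (\<Sum>u\<in>V - N. card (f u)) + (\<Sum>u\<in>N. card (f u))"
        unfolding weight_def using sum.subset_diff[OF NV fin] by simp
      moreover have "(\<Sum>u\<in>S - N. card (f u)) \<le> (\<Sum>u\<in>V - N. card (f u))"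
        by (rule sum_mono2) (use fin SV in auto)
      moreover have "card (S - N) = (\<Sum>u\<in>S - N. 1)" by simp
      moreover have "(\<Sum>u\<in>S - N. 1) \<le> (\<Sum>u\<in>S - N. card (f u))"
        by (rule sum_mono) (use card_ge1[OF f(1)] SV in \<open>auto simp: S_def\<close>)
      ultimately show ?thesis using s(1)[folded N_def] by linarith
    qed
    have wf': "weight V f' \<le> weight V f + card T"
    proof -
      have "weight V f' \<le> (\<Sum>v\<in>V. card (f v) + (if v \<in> T then 1 else 0))"
        unfolding weight_def f'_def
        by (rule sum_mono) (auto simp: card_insert_if card_insert_le_m1)
      also have "\<dots> = weight V f + card (V \<inter> T)"
        unfolding weight_def by (simp only: sum.distrib tst[OF fin])
      also have "V \<inter> T = T" using TV by blast
      finally show ?thesis .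
    qed
    have f'sub: "f' v \<subseteq> {1..k}" if "v \<in> V" for v
    proof -
      have "f v \<subseteq> {1..k}" using f(1) that by (simp add: is_kRDF_def)
      moreover have "1 \<in> {1..k}" using k by simp
      ultimately show ?thesis unfolding f'_def by simp
    qed
    have f'sup: "f v \<subseteq> f' v" for v unfolding f'_def by auto
    have kf': "is_kRDF k V A f'"
      unfolding is_kRDF_def
    proof (intro conjI ballI impI)
      fix v assume "v \<in> V"
      then show "f' v \<subseteq> {1..k}" by (rule f'sub)
    next
      fix v assume v: "v \<in> V" "f' v = {}"
      then have "f v = {}" using f'sup[of v] by blast
      then have U: "(\<Union>u\<in>in_nbrs A v. f u) = {1..k}" using f(1) v by (simp add: is_kRDF_def)
      have "(\<Union>u\<in>in_nbrs A v. f u) \<subseteq> (\<Union>u\<in>in_nbrs A v. f' u)"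
        by (intro UN_mono order_refl f'sup)
      moreover have "(\<Union>u\<in>in_nbrs A v. f' u) \<subseteq> {1..k}"
      proof (rule UN_least)
        fix u assume "u \<in> in_nbrs A v"
        then have "u \<in> V" using AV by (auto simp: in_nbrs_def)
        then show "f' u \<subseteq> {1..k}" by (rule f'sub)
      qed
      ultimately show "(\<Union>u\<in>in_nbrs A v. f' u) = {1..k}" unfolding U by (rule subset_antisym[rotated])
    qed
    define S' where "S' = {v\<in>V. f' v \<noteq> {}}"
    have SS': "S \<subseteq> S'" by (auto simp: S_def S'_def f'_def)
    have TS': "T \<subseteq> S'" using TV by (auto simp: S'_def f'_def)
    have tot: "no_isolated S' (induced_arcs A S')"
      unfolding no_isolated_def isolated_def induced_arcs_def
    proof (intro ballI)
      fix v assume vS': "v \<in> S'"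
      have "v \<in> S \<or> v \<in> T"
      proof (cases "v \<in> T")
        case False
        then have "f' v = f v" by (simp add: f'_def)
        then show ?thesis using vS' by (simp add: S'_def S_def)
      qed simp
      then show "\<not> \<not> (\<exists>u\<in>S'. (u, v) \<in> A \<inter> S' \<times> S' \<or> (v, u) \<in> A \<inter> S' \<times> S')"
      proof
        assume vS: "v \<in> S"
        show ?thesis
        proof (cases "v \<in> N")
          case True
          then have "(v,w) \<in> A" by (simp add: N_def in_nbrs_def)
          moreover have "w \<in> S'" using TS' by (auto simp: T_def)
          ultimately show ?thesis using vS' by (intro adj_ok) auto
        next
          case False
          then have "g v \<in> S'" using TS' vS by (auto simp: T_def)
          moreover have "(g v,v)\<in>A \<or> (v,g v)\<in>A" using gprop vS SV by blast
          ultimately show ?thesis using vS' by (intro adj_ok) auto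
        qed
      next
        assume vT: "v \<in> T"
        show ?thesis
        proof (cases "v = w")
          case True
          have U: "(\<Union>u\<in>N. f u) = {1..k}" using f(1) w by (simp add: is_kRDF_def N_def)
          have "1 \<in> (\<Union>u\<in>N. f u)" unfolding U using k by simp
          then obtain u where u: "u \<in> N" "1 \<in> f u" by (rule UN_E)
          then have u2: "f u \<noteq> {}" by blast
          have "u \<in> S" using NV u u2 by (auto simp: S_def)
          then have "u \<in> S'" using SS' by blast
          moreover have "(u,v) \<in> A" using u True by (simp add: N_def in_nbrs_def)
          ultimately show ?thesis using vS' by (intro adj_ok) auto
        next
          case False
          then obtain x where x: "x \<in> S - N" "v = g x" using vT by (auto simp: T_def)
          then have "x \<in> S'" using SS' by blast
          moreover have "(g x,x)\<in>A \<or> (x,g x)\<in>A" using gprop x SV by blast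
          ultimately show ?thesis using vS' x by (intro adj_ok) auto
        qed
      qed
    qed
    have "is_TkRDF k V A f'" using kf' tot by (simp add: is_TkRDF_def S'_def)
    then have "gamma_trk k V A \<le> weight V f'" by (rule trk_le)
    then show ?thesis using wf' cardT wS f(2) by linarith
  qed
qed


lemma part1:
  assumes k: "k \<ge> 1" and D: "digraph V A" and C: "connected_digraph V A"
    and n: "card V \<ge> max k 2"
  shows "gamma_rk k V A \<le> gamma_trk k V A"
proof -
  obtain g where g: "is_TkRDF k V A g" "weight V g = gamma_trk k V A"
    using trk_ex[OF ones_TkRDF[OF k D C]] n by auto
  have "is_kRDF k V A g" using g(1) by (simp add: is_TkRDF_def)
  then show ?thesis using rk_le g(2) by metis
qed

lemma weight_ge_card:
  assumes "is_kRDF k V A f" "\<forall>v\<in>V. f v \<noteq> {}"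
  shows "weight V f \<ge> card V"
proof -
  have "card V = (\<Sum>u\<in>V. 1)" by simp
  also have "\<dots> \<le> (\<Sum>u\<in>V. card (f u))"
    by (rule sum_mono) (use card_ge1[OF assms(1)] assms(2) in auto)
  finally show ?thesis by (simp add: weight_def)
qed

lemma rk_ge_k:
  assumes "k \<ge> 1" "digraph V A" "card V \<ge> k"
  shows "gamma_rk k V A \<ge> k"
proof -
  obtain g where g: "is_kRDF k V A g" "weight V g = gamma_rk k V A"
    using rk_ex[OF ones_kRDF[OF assms(1)]] by blast
  show ?thesis using weight_ge_k[OF g(1) assms(2,3)] g(2) by simp
qed

lemma ex_eq_big:
  fixes k :: nat
  assumes k: "k \<ge> 2"
  shows "\<exists>(W :: nat set) B. digraph W B \<and> connected_digraph W B \<and> card W \<ge> max k 2 \<and>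
              gamma_trk k W B = gamma_rk k W B"
proof -
  define W where "W = {0::nat..<k}"
  define B where "B = {(u,v). u\<in>W \<and> v\<in>W \<and> u\<noteq>v}"
  have D: "digraph W B" by (auto simp: digraph_def W_def B_def)
  have C: "connected_digraph W B"
    unfolding connected_digraph_def
  proof (intro ballI)
    fix u v assume uv: "u \<in> W" "v \<in> W"
    show "(u, v) \<in> (B \<union> B\<inverse>)\<^sup>*"
    proof (cases "u = v")
      case False
      then have "(u,v) \<in> B \<union> B\<inverse>" using uv by (auto simp: B_def)
      then show ?thesis by (rule r_into_rtrancl)
    qed simp
  qed
  have cW: "card W = k" by (simp add: W_def)
  define f where "f v = {v+1}" for v :: nat
  have kf: "is_kRDF k W B f" by (auto simp: is_kRDF_def f_def W_def)
  have "no_isolated W (induced_arcs B W)"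
    unfolding no_isolated_def isolated_def induced_arcs_def
  proof (intro ballI)
    fix v assume v: "v \<in> W"
    define u where "u = (if v = 0 then 1 else (0::nat))"
    have "u \<in> W" "u \<noteq> v" using k v by (auto simp: u_def W_def)
    then show "\<not> \<not> (\<exists>u\<in>W. (u, v) \<in> B \<inter> W \<times> W \<or> (v, u) \<in> B \<inter> W \<times> W)"
      using v by (auto simp: B_def)
  qed
  moreover have "{v\<in>W. f v \<noteq> {}} = W" by (auto simp: f_def)
  ultimately have tf: "is_TkRDF k W B f" using kf by (simp add: is_TkRDF_def)
  have wf: "weight W f = k" by (simp add: weight_def f_def W_def)
  have "gamma_trk k W B \<le> k" using trk_le[OF tf] wf by simp
  moreover have "gamma_rk k W B \<ge> k" using rk_ge_k[of k W B] k D cW by simp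
  moreover have "gamma_rk k W B \<le> gamma_trk k W B" using part1[of k W B] k D C cW by simp
  ultimately show ?thesis using D C cW k by (intro exI[of _ W] exI[of _ B]) simp
qed

lemma ex_eq_one:
  "\<exists>(W :: nat set) B. digraph W B \<and> connected_digraph W B \<and> card W \<ge> max 1 2 \<and>
              gamma_trk 1 W B = gamma_rk 1 W B"
proof -
  define W where "W = {0::nat,1,2}"
  define B where "B = {(0::nat,1::nat),(1,2)}"
  have D: "digraph W B" by (auto simp: digraph_def W_def B_def)
  have C: "connected_digraph W B"
    unfolding connected_digraph_def
  proof (intro ballI)
    have e: "(0,1) \<in> (B \<union> B\<inverse>)\<^sup>*" "(1,2) \<in> (B \<union> B\<inverse>)\<^sup>*"
      "(1,0) \<in> (B \<union> B\<inverse>)\<^sup>*" "(2,1) \<in> (B \<union> B\<inverse>)\<^sup>*" by (auto simp: B_def)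
    have e2: "(0,2) \<in> (B \<union> B\<inverse>)\<^sup>*" "(2,0) \<in> (B \<union> B\<inverse>)\<^sup>*"
      using e rtrancl_trans by metis+
    fix u v assume "u \<in> W" "v \<in> W"
    then show "(u, v) \<in> (B \<union> B\<inverse>)\<^sup>*" using e e2 by (auto simp: W_def)
  qed
  have cW: "card W = 3" by (simp add: W_def)
  define f where "f v = (if v = 2 then {} else {1::nat})" for v :: nat
  have kf: "is_kRDF 1 W B f" by (auto simp: is_kRDF_def f_def W_def in_nbrs_def B_def)
  have S: "{v\<in>W. f v \<noteq> {}} = {0,1}" by (auto simp: f_def W_def)
  have "no_isolated {0,1} (induced_arcs B {0,1})"
    by (auto simp: no_isolated_def isolated_def induced_arcs_def B_def)
  then have tf: "is_TkRDF 1 W B f" using kf S by (simp add: is_TkRDF_def)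
  have wf: "weight W f = 2" by (simp add: weight_def f_def W_def)
  have up: "gamma_trk 1 W B \<le> 2" using trk_le[OF tf] wf by simp
  have lo: "gamma_rk 1 W B \<ge> 2"
  proof -
    obtain g where g: "is_kRDF 1 W B g" "weight W g = gamma_rk 1 W B"
      using rk_ex[OF kf] by blast
    have n0: "in_nbrs B 0 = {}" "in_nbrs B 2 = {1}" by (auto simp: in_nbrs_def B_def)
    have g0: "g 0 \<noteq> {}"
    proof
      assume "g 0 = {}"
      then have "(\<Union>u\<in>in_nbrs B 0. g u) = {1..1}" using g(1) by (simp add: is_kRDF_def W_def)
      then show False using n0 by simp
    qed
    have g12: "g 1 \<noteq> {} \<or> g 2 \<noteq> {}"
    proof (rule ccontr)
      assume "\<not> ?thesis"
      then have "g 2 = {}" "g 1 = {}" by auto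
      then have "(\<Union>u\<in>in_nbrs B 2. g u) = {1..1}" using g(1) by (simp add: is_kRDF_def W_def)
      then show False using n0 \<open>g 1 = {}\<close> by simp
    qed
    have c: "card (g v) \<ge> 1" if "v \<in> W" "g v \<noteq> {}" for v using card_ge1[OF g(1) that] .
    have "weight W g = card (g 0) + card (g 1) + card (g 2)" by (simp add: weight_def W_def)
    moreover have "card (g 0) \<ge> 1" using c g0 by (simp add: W_def)
    moreover have "card (g 1) + card (g 2) \<ge> 1"
    proof (cases "g 1 = {}")
      case True
      then have "card (g 2) \<ge> 1" using c g12 by (simp add: W_def)
      then show ?thesis by simp
    next
      case False
      then have "card (g 1) \<ge> 1" using c by (simp add: W_def)
      then show ?thesis by simp
    qed
    ultimately show ?thesis using g(2) by linarith
  qed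
  have "gamma_rk 1 W B \<le> gamma_trk 1 W B" using part1[of 1 W B] D C cW by simp
  then have "gamma_trk 1 W B = gamma_rk 1 W B" using up lo by linarith
  then show ?thesis using D C cW by (intro exI[of _ W] exI[of _ B]) simp
qed


lemma ex_sharp:
  fixes k :: nat
  assumes k: "k \<ge> 1"
  shows "\<exists>(W :: nat set) B. digraph W B \<and> connected_digraph W B \<and> card W \<ge> max k 2 \<and>
              int (gamma_trk k W B) = 2 * int (gamma_rk k W B) - int k + 1"
proof -
  define W where "W = {0::nat..k}"
  define B where "B = (\<lambda>i. (0::nat, i)) ` {1..k}"
  have D: "digraph W B" by (auto simp: digraph_def W_def B_def)
  have to0: "(u,0) \<in> (B \<union> B\<inverse>)\<^sup>*" if "u \<in> W" for u
  proof (cases "u = 0")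
    case False
    then have "(u,0) \<in> B \<union> B\<inverse>" using that by (auto simp: B_def W_def)
    then show ?thesis by (rule r_into_rtrancl)
  qed simp
  have from0: "(0,u) \<in> (B \<union> B\<inverse>)\<^sup>*" if "u \<in> W" for u
  proof (cases "u = 0")
    case False
    then have "(0,u) \<in> B \<union> B\<inverse>" using that by (auto simp: B_def W_def)
    then show ?thesis by (rule r_into_rtrancl)
  qed simp
  have C: "connected_digraph W B"
    unfolding connected_digraph_def using to0 from0 rtrancl_trans by metis
  have cW: "card W = k + 1" by (simp add: W_def)
  have nb0: "in_nbrs B 0 = {}" by (auto simp: in_nbrs_def B_def)
  have nbj: "in_nbrs B j = {0}" if "j \<in> W" "j \<noteq> 0" for j
    using that by (auto simp: in_nbrs_def B_def W_def)
  define f0 where "f0 v = (if v = 0 then {1..k} else {})" for v :: nat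
  have kf0: "is_kRDF k W B f0"
    unfolding is_kRDF_def
  proof (intro conjI ballI impI)
    fix v assume "v \<in> W" then show "f0 v \<subseteq> {1..k}" by (simp add: f0_def)
  next
    fix v assume v: "v \<in> W" "f0 v = {}"
    then have "v \<noteq> 0" using k by (auto simp: f0_def split: if_splits)
    then show "(\<Union>u\<in>in_nbrs B v. f0 u) = {1..k}" using nbj[OF v(1)] by (simp add: f0_def)
  qed
  have "weight W f0 = (\<Sum>v\<in>W. if v = 0 then k else 0)"
    unfolding weight_def by (rule sum.cong) (auto simp: f0_def)
  also have "\<dots> = k" by (simp add: W_def)
  finally have wf0: "weight W f0 = k" .
  have rk: "gamma_rk k W B = k"
    using rk_le[OF kf0] wf0 rk_ge_k[of k W B] k D cW by simp
  define f1 where "f1 v = (if v = 0 then {1..k} else if v = 1 then {1} else {})" for v :: nat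
  have kf1: "is_kRDF k W B f1"
    unfolding is_kRDF_def
  proof (intro conjI ballI impI)
    fix v assume "v \<in> W" then show "f1 v \<subseteq> {1..k}" using k by (simp add: f1_def)
  next
    fix v assume v: "v \<in> W" "f1 v = {}"
    then have "v \<noteq> 0" using k by (auto simp: f1_def split: if_splits)
    then show "(\<Union>u\<in>in_nbrs B v. f1 u) = {1..k}" using nbj[OF v(1)] by (simp add: f1_def)
  qed
  have S1: "{v\<in>W. f1 v \<noteq> {}} = {0,1}" using k by (auto simp: f1_def W_def)
  have "(0::nat,1) \<in> B" using k by (auto simp: B_def)
  then have "no_isolated {0,1} (induced_arcs B {0,1})"
    by (auto simp: no_isolated_def isolated_def induced_arcs_def)
  then have tf1: "is_TkRDF k W B f1" using kf1 S1 by (simp add: is_TkRDF_def)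
  have "weight W f1 = (\<Sum>v\<in>W. (if v = 0 then k else 0) + (if v = 1 then 1 else 0))"
    unfolding weight_def by (rule sum.cong) (auto simp: f1_def)
  also have "\<dots> = k + 1" using k by (simp add: sum.distrib W_def)
  finally have wf1: "weight W f1 = k + 1" .
  have up: "gamma_trk k W B \<le> k + 1" using trk_le[OF tf1] wf1 by simp
  have lo: "gamma_trk k W B \<ge> k + 1"
  proof -
    obtain g where g: "is_TkRDF k W B g" "weight W g = gamma_trk k W B"
      using trk_ex[OF tf1] by blast
    have kg: "is_kRDF k W B g" using g(1) by (simp add: is_TkRDF_def)
    have finW: "finite W" by (simp add: W_def)
    have g0: "g 0 \<noteq> {}"
    proof
      assume "g 0 = {}"
      then have "(\<Union>u\<in>in_nbrs B 0. g u) = {1..k}" using kg by (simp add: is_kRDF_def W_def)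
      then show False using nb0 k by simp
    qed
    define S where "S = {v\<in>W. g v \<noteq> {}}"
    have "0 \<in> S" using g0 by (simp add: S_def W_def)
    moreover have "no_isolated S (induced_arcs B S)" using g(1) by (simp add: is_TkRDF_def S_def Let_def)
    ultimately obtain u where u: "u \<in> S" "(u,0) \<in> B \<or> (0,u) \<in> B"
      by (auto simp: no_isolated_def isolated_def induced_arcs_def)
    then have u1: "u \<in> W" "u \<noteq> 0" "g u \<noteq> {}" by (auto simp: B_def S_def)
    show ?thesis
    proof (cases "\<exists>j\<in>W. g j = {}")
      case True
      then obtain j where j: "j \<in> W" "g j = {}" by blast
      then have "j \<noteq> 0" using g0 by auto
      then have "(\<Union>u\<in>in_nbrs B j. g u) = {1..k}" using kg j by (simp add: is_kRDF_def)
      then have "g 0 = {1..k}" using nbj[OF j(1) \<open>j \<noteq> 0\<close>] by simp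
      then have c0: "card (g 0) = k" by simp
      have cu: "card (g u) \<ge> 1" using card_ge1[OF kg u1(1) u1(3)] .
      have "card (g 0) + card (g u) = (\<Sum>v\<in>{0,u}. card (g v))" using u1 by simp
      also have "\<dots> \<le> (\<Sum>v\<in>W. card (g v))"
        by (rule sum_mono2) (use finW u1 in \<open>auto simp: W_def\<close>)
      finally show ?thesis using c0 cu g(2) by (simp add: weight_def)
    next
      case False
      then have "weight W g \<ge> card W" using weight_ge_card[OF kg] by blast
      then show ?thesis using cW g(2) by simp
    qed
  qed
  have "gamma_trk k W B = k + 1" using up lo by simp
  then have "int (gamma_trk k W B) = 2 * int (gamma_rk k W B) - int k + 1" using rk by simp
  moreover have "card W \<ge> max k 2" using cW k by simp
  ultimately show ?thesis using D C by blast
qed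

theorem theorem2p3:
  fixes V :: "'a set" and A :: "('a \<times> 'a) set" and k :: nat
  assumes "k \<ge> 1" and "digraph V A" and "connected_digraph V A"
    and "card V \<ge> max k 2"
  shows "gamma_rk k V A \<le> gamma_trk k V A \<and>
         int (gamma_trk k V A) \<le> 2 * int (gamma_rk k V A) - int k + 1 \<and>
         (\<forall>k::nat. k \<ge> 1 \<longrightarrow>
           (\<exists>(W :: nat set) B. digraph W B \<and> connected_digraph W B \<and> card W \<ge> max k 2 \<and>
              gamma_trk k W B = gamma_rk k W B)) \<and>
         (\<forall>k::nat. k \<ge> 1 \<longrightarrow>
           (\<exists>(W :: nat set) B. digraph W B \<and> connected_digraph W B \<and> card W \<ge> max k 2 \<and>
              int (gamma_trk k W B) = 2 * int (gamma_rk k W B) - int k + 1))"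
proof (intro conjI allI impI)
  show "gamma_rk k V A \<le> gamma_trk k V A" by (rule part1[OF assms])
  show "int (gamma_trk k V A) \<le> 2 * int (gamma_rk k V A) - int k + 1" by (rule part2[OF assms])
next
  fix k :: nat assume k: "k \<ge> 1"
  show "\<exists>(W :: nat set) B. digraph W B \<and> connected_digraph W B \<and> card W \<ge> max k 2 \<and>
              gamma_trk k W B = gamma_rk k W B"
  proof (cases "k = 1")
    case True then show ?thesis using ex_eq_one by simp
  next
    case False then show ?thesis using ex_eq_big k by simp
  qed
next
  fix k :: nat assume k: "k \<ge> 1"
  show "\<exists>(W :: nat set) B. digraph W B \<and> connected_digraph W B \<and> card W \<ge> max k 2 \<and>
              int (gamma_trk k W B) = 2 * int (gamma_rk k W B) - int k + 1"
    by (rule ex_sharp[OF k])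
qed

end
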